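(* Let $I=\{1,\dots,\ell\}$, $J=\{\ell+1,\dots,p\}$, let $h_1,\dots,h_p\colon\mathbb R^n\times\mathbb R^m\to\overline{\mathbb R}$ be given and define $\Gamma\colon\mathbb R^n\rightrightarrows\mathbb R^m$ by $\Gamma(x):=\{y\in\mathbb R^m\mid h_i(x,y)\le 0\ (i\in I),\ h_i(x,y)=0\ (i\in J)\}$. Let $(\bar x,\bar y)\in\operatorname{gph}\Gamma$ and suppose that $\Gamma$ is R-regular at $(\bar x,\bar y)$ with respect to $\operatorname{dom}\Gamma$. Furthermore, let $h_1,\dots,h_p$ be continuous at $(\bar x,\bar y)$ and let $h_1(x,\cdot),\dots,h_p(x,\cdot)\colon\mathbb R^m\to\mathbb R$ be continuous for each $x\in\operatorname{dom}\Gamma$ from a neighborhood of $\bar x$. Then $\Gamma$ is inner semicontinuous at $(\bar x,\bar y)$ with respect to $\operatorname{dom}\Gamma$.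
   Context: $\operatorname{dom}\Gamma:=\{x\mid\Gamma(x)\neq\emptyset\}$, $\operatorname{gph}\Gamma:=\{(x,y)\mid y\in\Gamma(x)\}$; $\|\cdot\|$ is the Euclidean norm and $\operatorname{dist}(y,A):=\inf\{\|z-y\|\mid z\in A\}$ (equal to $+\infty$ if $A=\emptyset$). $\Gamma$ is called R-regular at $(\bar x,\bar y)\in\operatorname{gph}\Gamma$ with respect to $\Omega\subset\mathbb R^n$ if there exist $\kappa>0$ and a neighborhood $U$ of $(\bar x,\bar y)$ such that for all $(x,y)\in U\cap(\Omega\times\mathbb R^m)$: $\operatorname{dist}(y,\Gamma(x))\le\kappa\max\{0,\max_{i\in I}h_i(x,y),\max_{i\in J}|h_i(x,y)|\}$. A set-valued map $\Upsilon$ is inner semicontinuous at $(\bar x,\bar y)\in\operatorname{gph}\Upsilon$ with respect to $\Omega$ if for every sequence $\{x^k\}\subset\Omega$ with $x^k\to\bar x$ there is a sequence $y^k\to\bar y$ with $y^k\in\Upsilon(x^k)$ for all sufficiently large $k$. *)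

theory Defs
  imports "HOL-Analysis.Analysis" "HOL-Library.Extended_Real"
begin

definition Gam :: "(nat \<Rightarrow> 'a \<Rightarrow> 'b \<Rightarrow> ereal) \<Rightarrow> nat \<Rightarrow> nat \<Rightarrow> 'a \<Rightarrow> 'b set" where
  "Gam h l p x = {y. (\<forall>i\<in>{1..l}. h i x y \<le> 0) \<and> (\<forall>i\<in>{l+1..p}. h i x y = 0)}"

definition sv_dom :: "('a \<Rightarrow> 'b set) \<Rightarrow> 'a set" where
  "sv_dom G = {x. G x \<noteq> {}}"

definition sv_gph :: "('a \<Rightarrow> 'b set) \<Rightarrow> ('a \<times> 'b) set" where
  "sv_gph G = {(x, y). y \<in> G x}"

definition edist :: "'b::metric_space \<Rightarrow> 'b set \<Rightarrow> ereal" where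
  "edist y A = (if A = {} then \<infinity> else ereal (infdist y A))"

definition residual :: "(nat \<Rightarrow> 'a \<Rightarrow> 'b \<Rightarrow> ereal) \<Rightarrow> nat \<Rightarrow> nat \<Rightarrow> 'a \<Rightarrow> 'b \<Rightarrow> ereal" where
  "residual h l p x y = Max ({0} \<union> (\<lambda>i. h i x y) ` {1..l} \<union> (\<lambda>i. \<bar>h i x y\<bar>) ` {l+1..p})"

definition R_regular ::
  "(nat \<Rightarrow> 'a::real_normed_vector \<Rightarrow> 'b::real_normed_vector \<Rightarrow> ereal) \<Rightarrow> nat \<Rightarrow> nat \<Rightarrow> 'a \<Rightarrow> 'b \<Rightarrow> 'a set \<Rightarrow> bool" where
  "R_regular h l p xb yb \<Omega> \<longleftrightarrow>
     (\<exists>\<kappa>>0. \<exists>U. open U \<and> (xb, yb) \<in> U \<and>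
        (\<forall>x y. (x, y) \<in> U \<and> x \<in> \<Omega> \<longrightarrow> edist y (Gam h l p x) \<le> ereal \<kappa> * residual h l p x y))"

definition inner_semicont :: "('a::topological_space \<Rightarrow> 'b::topological_space set) \<Rightarrow> 'a \<Rightarrow> 'b \<Rightarrow> 'a set \<Rightarrow> bool" where
  "inner_semicont G xb yb \<Omega> \<longleftrightarrow>
     (\<forall>xk. (\<forall>k. xk k \<in> \<Omega>) \<and> xk \<longlonglongrightarrow> xb \<longrightarrow>
        (\<exists>yk. yk \<longlonglongrightarrow> yb \<and> (\<forall>\<^sub>F k in sequentially. yk k \<in> G (xk k))))"

end

theory Submission
  imports Defs
begin

lemma near_point:
  fixes x :: "'a::metric_space"
  assumes "A \<noteq> {}" "e > 0"
  shows "\<exists>a\<in>A. dist x a < infdist x A + e"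
proof -
  have "(INF a\<in>A. dist x a) < infdist x A + e" using assms by (simp add: infdist_notempty[OF assms(1)])
  moreover have "bdd_below ((\<lambda>a. dist x a) ` A)" by (rule bdd_belowI[of _ 0]) auto
  ultimately show ?thesis using assms(1) by (simp add: cINF_less_iff)
qed

lemma ereal_abs_less: "\<lbrakk>x < ereal e; - ereal e < x\<rbrakk> \<Longrightarrow> \<bar>x\<bar> < ereal e"
  by (cases x) auto

theorem lemma2p5:
  fixes h :: "nat \<Rightarrow> real ^ 'n \<Rightarrow> real ^ 'm \<Rightarrow> ereal"
    and l p :: nat and xb :: "real ^ 'n" and yb :: "real ^ 'm"
  assumes lp: "l \<le> p"
    and gph: "(xb, yb) \<in> sv_gph (Gam h l p)"
    and Rreg: "R_regular h l p xb yb (sv_dom (Gam h l p))"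
    and cont: "\<forall>i\<in>{1..p}. continuous (at (xb, yb)) (\<lambda>z. h i (fst z) (snd z))"
    and contx: "\<exists>V. open V \<and> xb \<in> V \<and>
        (\<forall>x\<in>V \<inter> sv_dom (Gam h l p). \<forall>i\<in>{1..p}.
           (\<forall>y. \<bar>h i x y\<bar> \<noteq> \<infinity>) \<and> continuous_on UNIV (\<lambda>y. h i x y))"
  shows "inner_semicont (Gam h l p) xb yb (sv_dom (Gam h l p))"
  unfolding inner_semicont_def
proof (intro allI impI, elim conjE)
  fix xk assume xkd: "\<forall>k. xk k \<in> sv_dom (Gam h l p)" and xkl: "xk \<longlonglongrightarrow> xb"
  let ?G = "Gam h l p"
  obtain \<kappa> U where kp: "\<kappa> > 0" and U: "open U" "(xb, yb) \<in> U"
    and reg: "\<And>x y. (x, y) \<in> U \<Longrightarrow> x \<in> sv_dom ?G \<Longrightarrow> edist y (?G x) \<le> ereal \<kappa> * residual h l p x y"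
    using Rreg unfolding R_regular_def by blast
  have ne: "?G (xk k) \<noteq> {}" for k using xkd by (simp add: sv_dom_def)
  have yb: "yb \<in> ?G xb" using gph by (simp add: sv_gph_def)
  have pl: "(\<lambda>k. (xk k, yb)) \<longlonglongrightarrow> (xb, yb)" using xkl by (intro tendsto_Pair) auto
  have hl: "(\<lambda>k. h i (xk k) yb) \<longlonglongrightarrow> h i xb yb" if "i \<in> {1..p}" for i
    using isCont_tendsto_compose[OF cont[rule_format, OF that] pl] by simp
  have evU: "\<forall>\<^sub>F k in sequentially. (xk k, yb) \<in> U"
    using pl U by (simp add: tendsto_def)
  have resid: "\<forall>\<^sub>F k in sequentially. residual h l p (xk k) yb < ereal e" if e: "e > 0" for e
  proof -
    have I: "\<forall>\<^sub>F k in sequentially. \<forall>i\<in>{1..l}. h i (xk k) yb < ereal e"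
    proof (rule eventually_ball_finite)
      show "\<forall>i\<in>{1..l}. \<forall>\<^sub>F k in sequentially. h i (xk k) yb < ereal e"
      proof
        fix i assume i: "i \<in> {1..l}"
        hence "h i xb yb \<le> 0" using yb by (simp add: Gam_def)
        hence "h i xb yb < ereal e" using e by (simp add: le_less_trans)
        thus "\<forall>\<^sub>F k in sequentially. h i (xk k) yb < ereal e"
          using order_tendstoD(2)[OF hl] i lp by auto
      qed
    qed simp
    have J: "\<forall>\<^sub>F k in sequentially. \<forall>i\<in>{l+1..p}. \<bar>h i (xk k) yb\<bar> < ereal e"
    proof (rule eventually_ball_finite)
      show "\<forall>i\<in>{l+1..p}. \<forall>\<^sub>F k in sequentially. \<bar>h i (xk k) yb\<bar> < ereal e"
      proof
        fix i assume i: "i \<in> {l+1..p}"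
        hence "h i xb yb = 0" using yb by (simp add: Gam_def)
        hence a: "h i xb yb < ereal e" "- ereal e < h i xb yb" using e by auto
        have i': "i \<in> {1..p}" using i by auto
        have "\<forall>\<^sub>F k in sequentially. h i (xk k) yb < ereal e"
          using order_tendstoD(2)[OF hl[OF i'] a(1)] .
        moreover have "\<forall>\<^sub>F k in sequentially. - ereal e < h i (xk k) yb"
          using order_tendstoD(1)[OF hl[OF i'] a(2)] .
        ultimately show "\<forall>\<^sub>F k in sequentially. \<bar>h i (xk k) yb\<bar> < ereal e"
          by eventually_elim (rule ereal_abs_less)
      qed
    qed simp
    from I J show ?thesis
    proof eventually_elim
      case (elim k)
      show ?case unfolding residual_def
        using elim e by (subst Max_less_iff) auto
    qed
  qed
  have dsmall: "\<forall>\<^sub>F k in sequentially. infdist yb (?G (xk k)) < e" if e: "e > 0" for e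
  proof -
    have "e / \<kappa> > 0" using e kp by simp
    from resid[OF this] evU show ?thesis
    proof eventually_elim
      case (elim k)
      let ?r = "residual h l p (xk k) yb"
      have r0: "0 \<le> ?r" unfolding residual_def by (rule Max_ge) auto
      then obtain r where r: "?r = ereal r" "r \<ge> 0" "r < e / \<kappa>"
        using elim(1) by (cases ?r) auto
      have "ereal (infdist yb (?G (xk k))) \<le> ereal \<kappa> * ereal r"
        using reg[OF elim(2) xkd[rule_format]] ne[of k] r(1) by (simp add: edist_def)
      hence "infdist yb (?G (xk k)) \<le> \<kappa> * r" by simp
      also have "\<kappa> * r < e" using r(3) kp by (simp add: field_simps)
      finally show ?case .
    qed
  qed
  have d0: "(\<lambda>k. infdist yb (?G (xk k))) \<longlonglongrightarrow> 0"
  proof (rule order_tendstoI)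
    fix a :: real assume "a < 0"
    thus "\<forall>\<^sub>F k in sequentially. a < infdist yb (?G (xk k))"
      by (intro always_eventually allI) (meson infdist_nonneg less_le_trans)
  next
    fix a :: real assume "0 < a" thus "\<forall>\<^sub>F k in sequentially. infdist yb (?G (xk k)) < a"
      by (rule dsmall)
  qed
  define yk where "yk k = (SOME a. a \<in> ?G (xk k) \<and> dist yb a < infdist yb (?G (xk k)) + 1 / (real k + 1))" for k
  have yk: "yk k \<in> ?G (xk k) \<and> dist yb (yk k) < infdist yb (?G (xk k)) + 1 / (real k + 1)" for k
  proof -
    have "\<exists>a\<in>?G (xk k). dist yb a < infdist yb (?G (xk k)) + 1 / (real k + 1)"
      by (rule near_point[OF ne]) simp
    thus ?thesis unfolding yk_def by (rule someI2_bex) auto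
  qed
  have lim1: "(\<lambda>k. infdist yb (?G (xk k)) + 1 / (real k + 1)) \<longlonglongrightarrow> 0"
    using tendsto_add[OF d0 LIMSEQ_inverse_real_of_nat] by (simp add: inverse_eq_divide add.commute)
  have "(\<lambda>k. dist (yk k) yb) \<longlonglongrightarrow> 0"
  proof (rule tendsto_sandwich[OF _ _ tendsto_const lim1])
    show "\<forall>\<^sub>F k in sequentially. 0 \<le> dist (yk k) yb" by simp
    show "\<forall>\<^sub>F k in sequentially. dist (yk k) yb \<le> infdist yb (?G (xk k)) + 1 / (real k + 1)"
      using yk by (intro always_eventually allI) (metis dist_commute less_imp_le)
  qed
  hence "yk \<longlonglongrightarrow> yb" using tendsto_dist_iff by blast
  moreover have "\<forall>\<^sub>F k in sequentially. yk k \<in> ?G (xk k)" using yk by (intro always_eventually) blast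
  ultimately show "\<exists>yk. yk \<longlonglongrightarrow> yb \<and> (\<forall>\<^sub>F k in sequentially. yk k \<in> ?G (xk k))" by blast
qed

end
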